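(* Let $n$ agents communicate over an undirected connected graph with adjacency matrix $A=[a_{ij}]\in\{0,1\}^{n\times n}$ ($a_{ij}=a_{ji}$, $a_{ii}=0$). Each agent $i$ has a time-varying reference signal $r_i:[0,\infty)\to\mathbb{R}^m$ with $\dot r_i(t)=f_i(t)$, and a state $x_i(t)\in\mathbb{R}^m$ updated by $$\dot x_i(t)=f_i(t)+\kappa\sum_{j=1}^n a_{ij}\big(x_j(t)-x_i(t)\big),\qquad x_i(0)=r_i(0),$$ where $\kappa>0$ is a constant. Fix an agent $i$ and consider the following observer, run by an external eavesdropper who knows $A$, $\kappa$ and the trajectories $x_j(t)$ of all agents $j$: $$\begin{aligned} \dot{\hat x}_i(t)&=\hat f_i(t)+\kappa\sum_{j=1}^n a_{ij}\big(x_j(t)-x_i(t)\big)+k_1\tilde x_i(t),\\ \dot{\hat r}_i(t)&=k_2\big(x_i(t)-z_i(t)-\hat r_i(t)\big)+\hat f_i(t),\\ \hat f_i(t)&=k_3x_i(t)+\hat f_i'(t),\\ \dot{\hat f}_i'(t)&=-k_3\Big(\hat f_i(t)+\kappa\sum_{j=1}^n a_{ij}\big(x_j(t)-x_i(t)\big)\Big)+k_4\tilde x_i(t), \end{aligned}$$ where $\tilde x_i(t)=x_i(t)-\hat x_i(t)$, $k_1,k_2,k_3,k_4$ are positive constants, and $z_i$ is the filter $\dot z_i(t)=\kappa\sum_{j=1}^n a_{ij}(x_j(t)-x_i(t))$, $z_i(0)=0$ (initial values of $\hat x_i,\hat r_i,\hat f_i'$ arbitrary). Assume $r_i$, $f_i$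 and $\dot f_i$ are bounded on $[0,\infty)$. Then the positive constants $k_1,\dots,k_4$ can be designed so that: (1) the estimation errors $\tilde r_i(t)=r_i(t)-\hat r_i(t)$ and $\tilde f_i(t)=f_i(t)-\hat f_i(t)$ are uniformly ultimately bounded; and (2) if in addition $\dot f_i\in\mathcal{L}_2$, then $\tilde r_i(t)\to0$ and $\tilde f_i(t)\to0$ as $t\to\infty$.
   Context: Uniformly ultimately bounded is in the standard sense of nonlinear systems theory (Khalil): there is a bound $b$ such that for every initial condition there is a time $T$ after which the error norm stays below $b$. $\mathcal{L}_2$ denotes square-integrable functions on $[0,\infty)$. *)

theory Defs
  imports "HOL-Analysis.Analysis"
begin

text \<open>Agents are indexed by 0..n-1; the adjacency matrix is a function on indices.\<close>

definition adjacency_matrix :: "nat \<Rightarrow> (nat \<Rightarrow> nat \<Rightarrow> real) \<Rightarrow> bool" where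
  "adjacency_matrix n A \<longleftrightarrow>
     (\<forall>i<n. \<forall>j<n. (A i j = 0 \<or> A i j = 1) \<and> A i j = A j i) \<and> (\<forall>i<n. A i i = 0)"

definition graph_connected :: "nat \<Rightarrow> (nat \<Rightarrow> nat \<Rightarrow> real) \<Rightarrow> bool" where
  "graph_connected n A \<longleftrightarrow>
     (\<forall>i<n. \<forall>j<n. (i, j) \<in> {(p, q). p < n \<and> q < n \<and> A p q = 1}\<^sup>*)"

definition coupling ::
  "nat \<Rightarrow> (nat \<Rightarrow> nat \<Rightarrow> real) \<Rightarrow> real \<Rightarrow> (nat \<Rightarrow> real \<Rightarrow> 'a::real_vector) \<Rightarrow> nat \<Rightarrow> real \<Rightarrow> 'a" where
  "coupling n A \<kappa> x i t = \<kappa> *\<^sub>R (\<Sum>j<n. A i j *\<^sub>R (x j t - x i t))"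

end

theory Submission imports Defs begin

lemma inner_self_deriv:
  fixes u :: "real \<Rightarrow> 'a::real_inner"
  assumes "(u has_vector_derivative u') (at t within S)"
  shows "((\<lambda>s. u s \<bullet> u s) has_real_derivative 2 * (u t \<bullet> u')) (at t within S)"
proof -
  have d: "(u has_derivative (\<lambda>h. h *\<^sub>R u')) (at t within S)"
    using assms by (simp add: has_vector_derivative_def)
  have "((\<lambda>s. u s \<bullet> u s) has_derivative (\<lambda>h. u t \<bullet> (h *\<^sub>R u') + (h *\<^sub>R u') \<bullet> u t)) (at t within S)"
    by (rule has_derivative_inner[OF d d])
  moreover have "(\<lambda>h. u t \<bullet> (h *\<^sub>R u') + (h *\<^sub>R u') \<bullet> u t) = (*) (2 * (u t \<bullet> u'))"
    by (auto simp: inner_commute algebra_simps)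
  ultimately show ?thesis
    by (simp add: has_field_derivative_def)
qed

lemma decay:
  fixes W Wd g :: "real \<Rightarrow> real" and c T t :: real
  assumes der: "\<And>s. s \<ge> 0 \<Longrightarrow> (W has_real_derivative Wd s) (at s within {0..})"
    and le: "\<And>s. s \<ge> 0 \<Longrightarrow> Wd s \<le> - W s / 2 + c + g s"
    and gnn: "\<And>s. s \<ge> 0 \<Longrightarrow> g s \<ge> 0"
    and gi: "(g has_integral I) {T..t}"
    and T: "0 \<le> T" "T \<le> t"
  shows "W t - 2*c \<le> exp (-(t-T)/2) * (W T - 2*c) + I"
proof -
  define Y where "Y s = exp (s/2) * (W s - 2*c)" for s
  define Yd where "Yd s = exp (s/2) / 2 * (W s - 2*c) + exp (s/2) * Wd s" for s
  have dY: "(Y has_vector_derivative Yd s) (at s within {T..t})" if "s \<in> {T..t}" for s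
  proof -
    have "(W has_real_derivative Wd s) (at s within {T..t})"
      using der[of s] that T by (auto intro: DERIV_subset)
    then have "(Y has_real_derivative Yd s) (at s within {T..t})"
      unfolding Y_def Yd_def
      by (auto intro!: derivative_eq_intros)
    then show ?thesis by (simp add: has_real_derivative_iff_has_vector_derivative)
  qed
  have i1: "(Yd has_integral (Y t - Y T)) {T..t}"
    by (rule fundamental_theorem_of_calculus[OF T(2) dY])
  have i2: "((\<lambda>s. exp (t/2) * g s) has_integral (exp (t/2) * I)) {T..t}"
    using has_integral_mult_right[OF gi] by simp
  have "Yd s \<le> exp (t/2) * g s" if "s \<in> {T..t}" for s
  proof -
    have s0: "s \<ge> 0" using that T by auto
    have "Yd s = exp (s/2) * (Wd s + W s / 2 - c)" by (simp add: Yd_def field_simps)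
    also have "\<dots> \<le> exp (s/2) * g s"
      using le[OF s0] by (intro mult_left_mono) auto
    also have "\<dots> \<le> exp (t/2) * g s"
      using that gnn[OF s0] by (intro mult_right_mono) auto
    finally show ?thesis .
  qed
  then have "Y t - Y T \<le> exp (t/2) * I"
    by (rule has_integral_le[OF i1 i2])
  have E: "exp (-t/2) * (exp (t/2) * I) = I"
    by (simp add: mult.assoc[symmetric] exp_add[symmetric])
  from \<open>Y t - Y T \<le> exp (t/2) * I\<close> have "exp (-t/2) * (Y t - Y T) \<le> exp (-t/2) * (exp (t/2) * I)"
    by (intro mult_left_mono) auto
  moreover have "exp (-t/2) * Y t = W t - 2*c"
    by (simp add: Y_def mult.assoc[symmetric] exp_add[symmetric])
  moreover have "exp (-t/2) * Y T = exp (-(t-T)/2) * (W T - 2*c)"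
    by (simp add: Y_def mult.assoc[symmetric] exp_add[symmetric] diff_divide_distrib)
  ultimately have "exp (-t/2) * (Y t - Y T) = (W t - 2*c) - exp (-(t-T)/2) * (W T - 2*c)"
    by (simp only: right_diff_distrib)
  then show ?thesis using \<open>exp (-t/2) * (Y t - Y T) \<le> exp (-t/2) * (exp (t/2) * I)\<close> E by linarith
qed

lemma tail:
  fixes g :: "real \<Rightarrow> real"
  assumes gi: "g integrable_on {0..}" and gnn: "\<And>s. s \<ge> 0 \<Longrightarrow> g s \<ge> 0" and e: "\<epsilon> > 0"
  shows "\<exists>T0\<ge>0. \<forall>t\<ge>T0. integral {T0..t} g \<le> \<epsilon>"
proof -
  define F where "F t = integral {0..t} g" for t
  have Fle: "F t \<le> integral {0..} g" for t
    unfolding F_def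
    by (rule integral_subset_le) (auto intro: integrable_on_subinterval[OF gi] gi gnn)
  define S where "S = (SUP t\<in>{0..}. F t)"
  have bdd: "bdd_above (F ` {0..})" using Fle by (intro bdd_aboveI[of _ "integral {0..} g"]) auto
  have "S - \<epsilon> < S" using e by simp
  then obtain T0 where T0: "T0 \<in> {0..}" "S - \<epsilon> < F T0"
    unfolding S_def using less_cSUP_iff[OF _ bdd] by force
  show ?thesis
  proof (intro exI[of _ T0] conjI allI impI)
    show "0 \<le> T0" using T0 by simp
    fix t assume t: "t \<ge> T0"
    have "integral {0..T0} g + integral {T0..t} g = integral {0..t} g"
      using T0 t by (intro Henstock_Kurzweil_Integration.integral_combine integrable_on_subinterval[OF gi]) (auto simp del: atLeastAtMost_iff)
    moreover have "F t \<le> S" unfolding S_def using bdd T0 t by (intro cSUP_upper) auto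
    ultimately show "integral {T0..t} g \<le> \<epsilon>" using T0 unfolding F_def by linarith
  qed
qed

lemma err_core:
  fixes ex ef er df :: "real \<Rightarrow> 'a::real_inner"
  assumes dx: "\<And>t. t \<ge> 0 \<Longrightarrow> (ex has_vector_derivative (ef t - ex t)) (at t within {0..})"
    and df: "\<And>t. t \<ge> 0 \<Longrightarrow> (ef has_vector_derivative (df t - ef t - ex t)) (at t within {0..})"
    and dr: "\<And>t. t \<ge> 0 \<Longrightarrow> (er has_vector_derivative (ef t - er t)) (at t within {0..})"
  shows "(\<forall>D. D \<ge> 0 \<longrightarrow> (\<forall>t\<ge>0. norm (df t) \<le> D) \<longrightarrow>
           (\<exists>T. \<forall>t\<ge>T. norm (er t) \<le> 2*D+1 \<and> norm (ef t) \<le> 2*D+1))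
    \<and> ((\<lambda>t. (norm (df t))\<^sup>2) integrable_on {0..} \<longrightarrow> (er \<longlongrightarrow> 0) at_top \<and> (ef \<longlongrightarrow> 0) at_top)"
proof -
  define W where "W t = ex t \<bullet> ex t + ef t \<bullet> ef t + er t \<bullet> er t" for t
  define Wd where "Wd t = 2*(ex t \<bullet> (ef t - ex t)) + 2*(ef t \<bullet> (df t - ef t - ex t)) + 2*(er t \<bullet> (ef t - er t))" for t
  have dW: "(W has_real_derivative Wd t) (at t within {0..})" if "t \<ge> 0" for t
    unfolding W_def Wd_def
    by (intro DERIV_add inner_self_deriv dx df dr that)
  have Wle: "Wd t \<le> - W t / 2 + 2 * (norm (df t))\<^sup>2" for t
  proof -
    have "0 \<le> (er t - ef t) \<bullet> (er t - ef t)" by simp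
    then have a: "2 * (er t \<bullet> ef t) \<le> er t \<bullet> er t + ef t \<bullet> ef t"
      by (simp add: inner_diff_left inner_diff_right inner_commute)
    have "0 \<le> (ef t - 2 *\<^sub>R df t) \<bullet> (ef t - 2 *\<^sub>R df t)" by simp
    then have b: "4 * (ef t \<bullet> df t) \<le> ef t \<bullet> ef t + 4 * (df t \<bullet> df t)"
      by (simp add: inner_diff_left inner_diff_right inner_commute)
    have c: "0 \<le> ex t \<bullet> ex t" "0 \<le> er t \<bullet> er t" "0 \<le> ef t \<bullet> ef t" by simp_all
    have eq: "Wd t = -2*(ex t \<bullet> ex t) - 2*(ef t \<bullet> ef t) - 2*(er t \<bullet> er t) + 2*(er t \<bullet> ef t) + 2*(ef t \<bullet> df t)"
      unfolding Wd_def by (simp add: inner_diff_right inner_commute algebra_simps)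
    show ?thesis
      unfolding eq W_def power2_norm_eq_inner using a b
      apply (simp add: field_simps inner_commute)
      apply (insert inner_ge_zero[of "ex t"] inner_ge_zero[of "er t"] inner_ge_zero[of "ef t"])
      apply linarith
      done
  qed
  have Wnn: "W t \<ge> 0" for t unfolding W_def by (intro add_nonneg_nonneg) auto
  have nr: "(norm (er t))\<^sup>2 \<le> W t" and nf: "(norm (ef t))\<^sup>2 \<le> W t" for t
    unfolding W_def power2_norm_eq_inner by auto
  have partA: "\<exists>T. \<forall>t\<ge>T. norm (er t) \<le> 2*D+1 \<and> norm (ef t) \<le> 2*D+1"
    if D: "D \<ge> 0" "\<forall>t\<ge>0. norm (df t) \<le> D" for D
  proof -
    define T where "T = 2 * ln (W 0 + 1)"
    have T0: "T \<ge> 0" unfolding T_def using Wnn[of 0] by simp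
    show ?thesis
    proof (intro exI[of _ T] allI impI)
      fix t assume t: "t \<ge> T"
      have "W t - 2*(2*D\<^sup>2) \<le> exp (-(t-0)/2) * (W 0 - 2*(2*D\<^sup>2)) + 0"
      proof (rule decay[where g = "\<lambda>_. 0" and Wd = Wd])
        fix s :: real assume s: "s \<ge> 0"
        show "(W has_real_derivative Wd s) (at s within {0..})" using dW s .
        have "(norm (df s))\<^sup>2 \<le> D\<^sup>2" using D s by (intro power_mono) auto
        then show "Wd s \<le> - W s / 2 + 2*D\<^sup>2 + 0" using Wle[of s] by linarith
      qed (use t T0 in auto)
      then have "W t - 4*D\<^sup>2 \<le> exp (-t/2) * W 0"
        using Wnn[of 0] by (smt (verit) exp_gt_zero mult_left_mono zero_le_power2)
      also have "\<dots> \<le> exp (-T/2) * W 0"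
        using t Wnn[of 0] by (intro mult_right_mono) auto
      also have "exp (-T/2) = 1 / (W 0 + 1)"
        unfolding T_def using Wnn[of 0] by (simp add: exp_minus exp_ln inverse_eq_divide)
      also have "1 / (W 0 + 1) * W 0 \<le> 1"
        using Wnn[of 0] by (simp add: field_simps)
      finally have "W t \<le> (2*D+1)\<^sup>2" using D by (simp add: power2_eq_square algebra_simps)
      then show "norm (er t) \<le> 2*D+1 \<and> norm (ef t) \<le> 2*D+1"
        using nr[of t] nf[of t] D
        by (meson order_trans power2_le_imp_le add_nonneg_nonneg mult_nonneg_nonneg zero_le_one zero_le_numeral)
    qed
  qed
  have partB: "(er \<longlongrightarrow> 0) at_top \<and> (ef \<longlongrightarrow> 0) at_top"
    if L2: "(\<lambda>t. (norm (df t))\<^sup>2) integrable_on {0..}"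
  proof -
    define g where "g t = 2 * (norm (df t))\<^sup>2" for t
    have gi: "g integrable_on {0..}" unfolding g_def using integrable_on_cmult_left[OF L2] by simp
    have gnn: "g s \<ge> 0" for s unfolding g_def by simp
    have ev: "eventually (\<lambda>t. W t < e) at_top" if e: "e > 0" for e
    proof -
      obtain T0 where T0: "T0 \<ge> 0" "\<forall>t\<ge>T0. integral {T0..t} g \<le> e/4"
        using tail[OF gi gnn, of "e/4"] e by auto
      define T1 where "T1 = T0 + 2 * ln ((W T0 + 1) * 2 / e)"
      have "W t < e" if t: "t \<ge> T0" "t \<ge> T1" for t
      proof -
        have "W t - 2*0 \<le> exp (-(t-T0)/2) * (W T0 - 2*0) + integral {T0..t} g"
        proof (rule decay[where g = g and Wd = Wd])
          fix s :: real assume s: "s \<ge> 0"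
          show "(W has_real_derivative Wd s) (at s within {0..})" using dW s .
          show "Wd s \<le> - W s / 2 + 0 + g s" using Wle[of s] unfolding g_def by simp
        qed (use t T0 gnn integrable_on_subinterval[OF gi, of T0 t] in auto)
        moreover have "exp (-(t-T0)/2) \<le> exp (-(T1-T0)/2)" using t by simp
        moreover have "exp (-(T1-T0)/2) = e / (2 * (W T0 + 1))"
          unfolding T1_def using Wnn[of T0] e by (simp add: exp_minus exp_ln inverse_eq_divide)
        moreover have "e / (2 * (W T0 + 1)) * W T0 \<le> e/2"
          using Wnn[of T0] e by (simp add: field_simps)
        ultimately have "W t \<le> e/2 + e/4"
          using T0 t Wnn[of T0]
          by (smt (verit) mult_right_mono)
        then show ?thesis using e by simp
      qed
      then show ?thesis unfolding eventually_at_top_linorder by (intro exI[of _ "max T0 T1"]) auto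
    qed
    have W0: "(W \<longlongrightarrow> 0) at_top"
    proof (rule order_tendstoI)
      fix a :: real assume "a < 0" then show "eventually (\<lambda>t. a < W t) at_top"
        using Wnn by (auto intro: always_eventually less_le_trans)
    next
      fix a :: real assume "0 < a" then show "eventually (\<lambda>t. W t < a) at_top" by (rule ev)
    qed
    have sW: "((\<lambda>t. sqrt (W t)) \<longlongrightarrow> 0) at_top" using tendsto_real_sqrt[OF W0] by simp
    have "((\<lambda>t. norm (er t)) \<longlongrightarrow> 0) at_top"
      by (rule real_tendsto_sandwich[OF _ _ tendsto_const sW]) (auto intro!: always_eventually real_le_rsqrt nr)
    moreover have "((\<lambda>t. norm (ef t)) \<longlongrightarrow> 0) at_top"
      by (rule real_tendsto_sandwich[OF _ _ tendsto_const sW]) (auto intro!: always_eventually real_le_rsqrt nf)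
    ultimately show ?thesis by (simp add: tendsto_norm_zero_iff)
  qed
  show ?thesis using partA partB by blast
qed

lemma obs_err:
  fixes x r f :: "nat \<Rightarrow> real \<Rightarrow> real^'m" and df xh rh fp z :: "real \<Rightarrow> real^'m"
  assumes k: "k1 = 1" "k2 = 1" "k3 = 1" "k4 = 1" and i: "i < n"
    and hr: "\<forall>j<n. \<forall>t\<ge>0. (r j has_vector_derivative f j t) (at t within {0..})"
    and hx: "\<forall>j<n. \<forall>t\<ge>0. (x j has_vector_derivative (f j t + coupling n A \<kappa> x j t)) (at t within {0..})"
    and x0: "\<forall>j<n. x j 0 = r j 0"
    and hf: "\<forall>t\<ge>0. (f i has_vector_derivative df t) (at t within {0..})"
    and oxh: "\<forall>t\<ge>0. (xh has_vector_derivative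
                     ((k3 *\<^sub>R x i t + fp t) + coupling n A \<kappa> x i t + k1 *\<^sub>R (x i t - xh t)))
                   (at t within {0..})"
    and orh: "\<forall>t\<ge>0. (rh has_vector_derivative
                     (k2 *\<^sub>R (x i t - z t - rh t) + (k3 *\<^sub>R x i t + fp t)))
                   (at t within {0..})"
    and ofp: "\<forall>t\<ge>0. (fp has_vector_derivative
                     (- k3 *\<^sub>R ((k3 *\<^sub>R x i t + fp t) + coupling n A \<kappa> x i t)
                      + k4 *\<^sub>R (x i t - xh t)))
                   (at t within {0..})"
    and oz: "\<forall>t\<ge>0. (z has_vector_derivative coupling n A \<kappa> x i t) (at t within {0..})"
    and z0: "z 0 = 0"
  shows "\<And>t. t \<ge> 0 \<Longrightarrow> ((\<lambda>t. x i t - xh t) has_vector_derivative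
            ((f i t - (k3 *\<^sub>R x i t + fp t)) - (x i t - xh t))) (at t within {0..})"
    "\<And>t. t \<ge> 0 \<Longrightarrow> ((\<lambda>t. f i t - (k3 *\<^sub>R x i t + fp t)) has_vector_derivative
            (df t - (f i t - (k3 *\<^sub>R x i t + fp t)) - (x i t - xh t))) (at t within {0..})"
    "\<And>t. t \<ge> 0 \<Longrightarrow> ((\<lambda>t. r i t - rh t) has_vector_derivative
            ((f i t - (k3 *\<^sub>R x i t + fp t)) - (r i t - rh t))) (at t within {0..})"
proof -
  define c where "c t = coupling n A \<kappa> x i t" for t
  have xz: "x i t - z t = r i t" if t: "t \<ge> 0" for t
  proof -
    define F where "F s = x i s - z s - r i s" for s
    have "(F has_vector_derivative 0) (at s within {0..t})" if "s \<in> {0..t}" for s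
    proof -
      have "(F has_vector_derivative ((f i s + c s) - c s - f i s)) (at s within {0..})"
        unfolding F_def c_def using that hx hr oz i
        by (intro has_vector_derivative_diff) auto
      then show ?thesis
        by (auto intro: has_vector_derivative_within_subset)
    qed
    then have "((\<lambda>_. 0) has_integral (F t - F 0)) {0..t}"
      using t by (intro fundamental_theorem_of_calculus) auto
    then have "F t - F 0 = 0" using has_integral_0 has_integral_unique by blast
    moreover have "F 0 = 0" unfolding F_def using x0 z0 i by simp
    ultimately show ?thesis unfolding F_def by (simp add: algebra_simps)
  qed
  fix t :: real assume t: "t \<ge> 0"
  show "((\<lambda>t. x i t - xh t) has_vector_derivative
            ((f i t - (k3 *\<^sub>R x i t + fp t)) - (x i t - xh t))) (at t within {0..})"
    using hx[rule_format, OF i t] oxh[rule_format, OF t]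
    by (rule has_vector_derivative_diff[THEN has_vector_derivative_eq_rhs]) (simp add: k algebra_simps)
  show "((\<lambda>t. f i t - (k3 *\<^sub>R x i t + fp t)) has_vector_derivative
            (df t - (f i t - (k3 *\<^sub>R x i t + fp t)) - (x i t - xh t))) (at t within {0..})"
    using hf[rule_format, OF t] hx[rule_format, OF i t] ofp[rule_format, OF t]
    by (auto intro!: derivative_eq_intros simp: k algebra_simps)
  show "((\<lambda>t. r i t - rh t) has_vector_derivative
            ((f i t - (k3 *\<^sub>R x i t + fp t)) - (r i t - rh t))) (at t within {0..})"
    using hr[rule_format, OF i t] orh[rule_format, OF t]
  proof (rule has_vector_derivative_diff[THEN has_vector_derivative_eq_rhs])
    have e: "x i t - z t - rh t = r i t - rh t" using xz[OF t] by simp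
    show "f i t - (k2 *\<^sub>R (x i t - z t - rh t) + (k3 *\<^sub>R x i t + fp t)) =
      f i t - (k3 *\<^sub>R x i t + fp t) - (r i t - rh t)"
      unfolding e by (simp add: k algebra_simps)
  qed
qed

lemma final:
  fixes x r f :: "nat \<Rightarrow> real \<Rightarrow> real^'m" and df :: "real \<Rightarrow> real^'m"
  assumes k: "k1 = 1" "k2 = 1" "k3 = 1" "k4 = 1"
    and H: "adjacency_matrix n A \<and> graph_connected n A \<and> \<kappa> > 0 \<and> i < n \<and>
      (\<forall>j<n. \<forall>t\<ge>0. (r j has_vector_derivative f j t) (at t within {0..})) \<and>
      (\<forall>j<n. \<forall>t\<ge>0. (x j has_vector_derivative (f j t + coupling n A \<kappa> x j t)) (at t within {0..})) \<and>
      (\<forall>j<n. x j 0 = r j 0) \<and>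
      (\<forall>t\<ge>0. (f i has_vector_derivative df t) (at t within {0..})) \<and>
      bounded (r i ` {0..}) \<and> bounded (f i ` {0..}) \<and> bounded (df ` {0..})"
  shows
      "(\<exists>b::real. \<forall>(xh::real \<Rightarrow> real^'m) (rh::real \<Rightarrow> real^'m) (fp::real \<Rightarrow> real^'m) (z::real \<Rightarrow> real^'m).
         (\<forall>t\<ge>0. (xh has_vector_derivative
                     ((k3 *\<^sub>R x i t + fp t) + coupling n A \<kappa> x i t + k1 *\<^sub>R (x i t - xh t)))
                   (at t within {0..})) \<and>
         (\<forall>t\<ge>0. (rh has_vector_derivative
                     (k2 *\<^sub>R (x i t - z t - rh t) + (k3 *\<^sub>R x i t + fp t)))
                   (at t within {0..})) \<and>
         (\<forall>t\<ge>0. (fp has_vector_derivative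
                     (- k3 *\<^sub>R ((k3 *\<^sub>R x i t + fp t) + coupling n A \<kappa> x i t)
                      + k4 *\<^sub>R (x i t - xh t)))
                   (at t within {0..})) \<and>
         (\<forall>t\<ge>0. (z has_vector_derivative coupling n A \<kappa> x i t) (at t within {0..})) \<and>
         z 0 = 0
         \<longrightarrow>
         (\<exists>T. \<forall>t\<ge>T. norm (r i t - rh t) \<le> b \<and> norm (f i t - (k3 *\<^sub>R x i t + fp t)) \<le> b)) \<and>
      ((\<lambda>t. (norm (df t))\<^sup>2) integrable_on {0..} \<longrightarrow>
        (\<forall>(xh::real \<Rightarrow> real^'m) (rh::real \<Rightarrow> real^'m) (fp::real \<Rightarrow> real^'m) (z::real \<Rightarrow> real^'m).
         (\<forall>t\<ge>0. (xh has_vector_derivative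
                     ((k3 *\<^sub>R x i t + fp t) + coupling n A \<kappa> x i t + k1 *\<^sub>R (x i t - xh t)))
                   (at t within {0..})) \<and>
         (\<forall>t\<ge>0. (rh has_vector_derivative
                     (k2 *\<^sub>R (x i t - z t - rh t) + (k3 *\<^sub>R x i t + fp t)))
                   (at t within {0..})) \<and>
         (\<forall>t\<ge>0. (fp has_vector_derivative
                     (- k3 *\<^sub>R ((k3 *\<^sub>R x i t + fp t) + coupling n A \<kappa> x i t)
                      + k4 *\<^sub>R (x i t - xh t)))
                   (at t within {0..})) \<and>
         (\<forall>t\<ge>0. (z has_vector_derivative coupling n A \<kappa> x i t) (at t within {0..})) \<and>
         z 0 = 0
         \<longrightarrow>
         ((\<lambda>t. r i t - rh t) \<longlongrightarrow> 0) at_top \<and>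
         ((\<lambda>t. f i t - (k3 *\<^sub>R x i t + fp t)) \<longlongrightarrow> 0) at_top))"
proof -
  from H have i: "i < n"
    and hr: "\<forall>j<n. \<forall>t\<ge>0. (r j has_vector_derivative f j t) (at t within {0..})"
    and hx: "\<forall>j<n. \<forall>t\<ge>0. (x j has_vector_derivative (f j t + coupling n A \<kappa> x j t)) (at t within {0..})"
    and x0: "\<forall>j<n. x j 0 = r j 0"
    and hf: "\<forall>t\<ge>0. (f i has_vector_derivative df t) (at t within {0..})"
    and bd: "bounded (df ` {0..})" by auto
  obtain D0 where D0: "\<forall>y\<in>df ` {0..}. norm y \<le> D0" using bd unfolding bounded_iff by blast
  define D where "D = max D0 0"
  have D: "D \<ge> 0" "\<forall>t\<ge>0. norm (df t) \<le> D" using D0 unfolding D_def by force+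
  note OE = obs_err[OF k i hr hx x0 hf]
  show ?thesis
  proof (rule conjI[OF exI[of _ "2*D+1"]]; intro allI impI)
    fix xh rh fp z :: "real \<Rightarrow> real^'m"
    assume O: "(\<forall>t\<ge>0. (xh has_vector_derivative
                     ((k3 *\<^sub>R x i t + fp t) + coupling n A \<kappa> x i t + k1 *\<^sub>R (x i t - xh t)))
                   (at t within {0..})) \<and>
         (\<forall>t\<ge>0. (rh has_vector_derivative
                     (k2 *\<^sub>R (x i t - z t - rh t) + (k3 *\<^sub>R x i t + fp t)))
                   (at t within {0..})) \<and>
         (\<forall>t\<ge>0. (fp has_vector_derivative
                     (- k3 *\<^sub>R ((k3 *\<^sub>R x i t + fp t) + coupling n A \<kappa> x i t)
                      + k4 *\<^sub>R (x i t - xh t)))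
                   (at t within {0..})) \<and>
         (\<forall>t\<ge>0. (z has_vector_derivative coupling n A \<kappa> x i t) (at t within {0..})) \<and>
         z 0 = 0"
    have C: "(\<forall>D. D \<ge> 0 \<longrightarrow> (\<forall>t\<ge>0. norm (df t) \<le> D) \<longrightarrow>
           (\<exists>T. \<forall>t\<ge>T. norm (r i t - rh t) \<le> 2*D+1 \<and> norm (f i t - (k3 *\<^sub>R x i t + fp t)) \<le> 2*D+1))
    \<and> ((\<lambda>t. (norm (df t))\<^sup>2) integrable_on {0..} \<longrightarrow> ((\<lambda>t. r i t - rh t) \<longlongrightarrow> 0) at_top \<and> ((\<lambda>t. f i t - (k3 *\<^sub>R x i t + fp t)) \<longlongrightarrow> 0) at_top)"
      using err_core[where ex = "\<lambda>t. x i t - xh t" and ef = "\<lambda>t. f i t - (k3 *\<^sub>R x i t + fp t)" and er = "\<lambda>t. r i t - rh t" and df = df,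
          OF OE[OF O[THEN conjunct1] O[THEN conjunct2, THEN conjunct1] O[THEN conjunct2, THEN conjunct2, THEN conjunct1]
          O[THEN conjunct2, THEN conjunct2, THEN conjunct2, THEN conjunct1] O[THEN conjunct2, THEN conjunct2, THEN conjunct2, THEN conjunct2]]]
      by blast
    then show "\<exists>T. \<forall>t\<ge>T. norm (r i t - rh t) \<le> 2*D+1 \<and> norm (f i t - (k3 *\<^sub>R x i t + fp t)) \<le> 2*D+1"
      using D by blast
  next
    fix xh rh fp z :: "real \<Rightarrow> real^'m"
    assume L2: "(\<lambda>t. (norm (df t))\<^sup>2) integrable_on {0..}"
    assume O: "(\<forall>t\<ge>0. (xh has_vector_derivative
                     ((k3 *\<^sub>R x i t + fp t) + coupling n A \<kappa> x i t + k1 *\<^sub>R (x i t - xh t)))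
                   (at t within {0..})) \<and>
         (\<forall>t\<ge>0. (rh has_vector_derivative
                     (k2 *\<^sub>R (x i t - z t - rh t) + (k3 *\<^sub>R x i t + fp t)))
                   (at t within {0..})) \<and>
         (\<forall>t\<ge>0. (fp has_vector_derivative
                     (- k3 *\<^sub>R ((k3 *\<^sub>R x i t + fp t) + coupling n A \<kappa> x i t)
                      + k4 *\<^sub>R (x i t - xh t)))
                   (at t within {0..})) \<and>
         (\<forall>t\<ge>0. (z has_vector_derivative coupling n A \<kappa> x i t) (at t within {0..})) \<and>
         z 0 = 0"
    have C: "(\<forall>D. D \<ge> 0 \<longrightarrow> (\<forall>t\<ge>0. norm (df t) \<le> D) \<longrightarrow>
           (\<exists>T. \<forall>t\<ge>T. norm (r i t - rh t) \<le> 2*D+1 \<and> norm (f i t - (k3 *\<^sub>R x i t + fp t)) \<le> 2*D+1))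
    \<and> ((\<lambda>t. (norm (df t))\<^sup>2) integrable_on {0..} \<longrightarrow> ((\<lambda>t. r i t - rh t) \<longlongrightarrow> 0) at_top \<and> ((\<lambda>t. f i t - (k3 *\<^sub>R x i t + fp t)) \<longlongrightarrow> 0) at_top)"
      using err_core[where ex = "\<lambda>t. x i t - xh t" and ef = "\<lambda>t. f i t - (k3 *\<^sub>R x i t + fp t)" and er = "\<lambda>t. r i t - rh t" and df = df,
          OF OE[OF O[THEN conjunct1] O[THEN conjunct2, THEN conjunct1] O[THEN conjunct2, THEN conjunct2, THEN conjunct1]
          O[THEN conjunct2, THEN conjunct2, THEN conjunct2, THEN conjunct1] O[THEN conjunct2, THEN conjunct2, THEN conjunct2, THEN conjunct2]]]
      by blast
    then show "((\<lambda>t. r i t - rh t) \<longlongrightarrow> 0) at_top \<and> ((\<lambda>t. f i t - (k3 *\<^sub>R x i t + fp t)) \<longlongrightarrow> 0) at_top"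
      using L2 by blast
  qed
qed

theorem theorem1:
  shows "\<exists>k1 k2 k3 k4 :: real. k1 > 0 \<and> k2 > 0 \<and> k3 > 0 \<and> k4 > 0 \<and>
    (\<forall>(n::nat) (A::nat \<Rightarrow> nat \<Rightarrow> real) (\<kappa>::real) (i::nat)
        (r::nat \<Rightarrow> real \<Rightarrow> real^'m) (f::nat \<Rightarrow> real \<Rightarrow> real^'m)
        (df::real \<Rightarrow> real^'m) (x::nat \<Rightarrow> real \<Rightarrow> real^'m).
      adjacency_matrix n A \<and> graph_connected n A \<and> \<kappa> > 0 \<and> i < n \<and>
      (\<forall>j<n. \<forall>t\<ge>0. (r j has_vector_derivative f j t) (at t within {0..})) \<and>
      (\<forall>j<n. \<forall>t\<ge>0. (x j has_vector_derivative (f j t + coupling n A \<kappa> x j t)) (at t within {0..})) \<and>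
      (\<forall>j<n. x j 0 = r j 0) \<and>
      (\<forall>t\<ge>0. (f i has_vector_derivative df t) (at t within {0..})) \<and>
      bounded (r i ` {0..}) \<and> bounded (f i ` {0..}) \<and> bounded (df ` {0..})
      \<longrightarrow>
      (\<exists>b::real. \<forall>(xh::real \<Rightarrow> real^'m) (rh::real \<Rightarrow> real^'m) (fp::real \<Rightarrow> real^'m) (z::real \<Rightarrow> real^'m).
         (\<forall>t\<ge>0. (xh has_vector_derivative
                     ((k3 *\<^sub>R x i t + fp t) + coupling n A \<kappa> x i t + k1 *\<^sub>R (x i t - xh t)))
                   (at t within {0..})) \<and>
         (\<forall>t\<ge>0. (rh has_vector_derivative
                     (k2 *\<^sub>R (x i t - z t - rh t) + (k3 *\<^sub>R x i t + fp t)))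
                   (at t within {0..})) \<and>
         (\<forall>t\<ge>0. (fp has_vector_derivative
                     (- k3 *\<^sub>R ((k3 *\<^sub>R x i t + fp t) + coupling n A \<kappa> x i t)
                      + k4 *\<^sub>R (x i t - xh t)))
                   (at t within {0..})) \<and>
         (\<forall>t\<ge>0. (z has_vector_derivative coupling n A \<kappa> x i t) (at t within {0..})) \<and>
         z 0 = 0
         \<longrightarrow>
         (\<exists>T. \<forall>t\<ge>T. norm (r i t - rh t) \<le> b \<and> norm (f i t - (k3 *\<^sub>R x i t + fp t)) \<le> b)) \<and>
      ((\<lambda>t. (norm (df t))\<^sup>2) integrable_on {0..} \<longrightarrow>
        (\<forall>(xh::real \<Rightarrow> real^'m) (rh::real \<Rightarrow> real^'m) (fp::real \<Rightarrow> real^'m) (z::real \<Rightarrow> real^'m).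
         (\<forall>t\<ge>0. (xh has_vector_derivative
                     ((k3 *\<^sub>R x i t + fp t) + coupling n A \<kappa> x i t + k1 *\<^sub>R (x i t - xh t)))
                   (at t within {0..})) \<and>
         (\<forall>t\<ge>0. (rh has_vector_derivative
                     (k2 *\<^sub>R (x i t - z t - rh t) + (k3 *\<^sub>R x i t + fp t)))
                   (at t within {0..})) \<and>
         (\<forall>t\<ge>0. (fp has_vector_derivative
                     (- k3 *\<^sub>R ((k3 *\<^sub>R x i t + fp t) + coupling n A \<kappa> x i t)
                      + k4 *\<^sub>R (x i t - xh t)))
                   (at t within {0..})) \<and>
         (\<forall>t\<ge>0. (z has_vector_derivative coupling n A \<kappa> x i t) (at t within {0..})) \<and>
         z 0 = 0
         \<longrightarrow>
         ((\<lambda>t. r i t - rh t) \<longlongrightarrow> 0) at_top \<and>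
         ((\<lambda>t. f i t - (k3 *\<^sub>R x i t + fp t)) \<longlongrightarrow> 0) at_top)))"
  apply (rule exI[of _ 1])+
  apply (rule conjI, simp)+
  apply (intro allI impI)
  apply (erule final[OF refl refl refl refl])
  done

end
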